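(* Consider the two-layer multi-item order fulfillment problem described in the context with a single FDC ($K=1$), fixed costs $f_0\ge0$, $f_1>0$, and variable costs satisfying $a\le c_{k,t}^i\le b$ for constants $b>a>0$. Let \textsc{Cost-Comparison AdjV-Priority} be the following policy. In each period $t$, for each item $i$, set $\hat m_{1,t}^i=\min\{S_t^i,I_{1,t-1}^i\}$ if $c_{1,t}^i<\sqrt{a/b}\,c_{0,t}^i$ and $\hat m_{1,t}^i=0$ otherwise, and $\hat m_{0,t}^i=S_t^i-\hat m_{1,t}^i$. If \[\sum_{k=0,1}\Big[f_k\,\mathbb{I}\Big(\sum_{i=1}^n\hat m_{k,t}^i>0\Big)+\sum_{i=1}^nc_{k,t}^i\hat m_{k,t}^i\Big]>f_0+\sum_{i=1}^nc_{0,t}^iS_t^i,\] fulfill the whole order from the RDC ($m_{0,t}^i=S_t^i$, $m_{1,t}^i=0$); otherwise set $m_{k,t}^i=\hat m_{k,t}^i$. Then \[\mathfrak R(\textsc{Cost-Comparison AdjV-Priority})\le 1+\max\left\{\frac{f_0}{f_1},\ \sqrt{\frac ba}\right\}.\]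
   Context: Problem with one FDC (index $1$) and one RDC (index $0$, unlimited inventory). The FDC initially holds $I_{1,0}^i\ge0$ units of item $i\in[n]$, never replenished. In periods $t=1,\dots,T$ an order $\boldsymbol S_t=(S_t^i)_i$ of nonnegative integers arrives; after observing it and the variable costs $c_{k,t}^i$, the policy must immediately and irrevocably choose $m_{0,t}^i,m_{1,t}^i\ge0$ with $m_{0,t}^i+m_{1,t}^i=S_t^i$ and $m_{1,t}^i\le I_{1,t-1}^i$, where $I_{1,t}^i=I_{1,0}^i-\sum_{\tau\le t}m_{1,\tau}^i$. Period cost $\sum_{k=0,1}[f_k\mathbb{I}(\sum_im_{k,t}^i>0)+\sum_ic_{k,t}^im_{k,t}^i]$; total cost is the sum over periods. Online policies decide in period $t$ using only fixed costs, initial inventories and orders/variable costs up to $t$ (and the known constants $a,b$). $\mathrm{ALG}(I)$: (expected) total cost; $\mathrm{OPT}(I)$: offline optimal total cost. $\mathfrak R(\mathrm{ALG})$ is the supremum of $\mathrm{ALG}(I)/\mathrm{OPT}(I)$ over all $n,T$, initial inventories, variable costs in $[a,b]$ and order sequences. *)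

theory Defs
  imports Complex_Main
begin

text \<open>Model. Items are indexed by i < n, periods by t in {1..T}.
  Orders: S t i (nat). Variable costs: c0 t i (RDC), c1 t i (FDC).
  Fulfillment plan: m0 t i (from RDC), m1 t i (from FDC).\<close>

definition ind :: "bool \<Rightarrow> real" where
  "ind P = (if P then 1 else 0)"

definition period_cost ::
  "real \<Rightarrow> real \<Rightarrow> nat \<Rightarrow> (nat \<Rightarrow> nat \<Rightarrow> real) \<Rightarrow> (nat \<Rightarrow> nat \<Rightarrow> real)
   \<Rightarrow> (nat \<Rightarrow> nat \<Rightarrow> nat) \<Rightarrow> (nat \<Rightarrow> nat \<Rightarrow> nat) \<Rightarrow> nat \<Rightarrow> real" where
  "period_cost f0 f1 n c0 c1 m0 m1 t =
     (f0 * ind ((\<Sum>i<n. m0 t i) > 0) + (\<Sum>i<n. c0 t i * real (m0 t i)))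
   + (f1 * ind ((\<Sum>i<n. m1 t i) > 0) + (\<Sum>i<n. c1 t i * real (m1 t i)))"

definition total_cost ::
  "real \<Rightarrow> real \<Rightarrow> nat \<Rightarrow> nat \<Rightarrow> (nat \<Rightarrow> nat \<Rightarrow> real) \<Rightarrow> (nat \<Rightarrow> nat \<Rightarrow> real)
   \<Rightarrow> (nat \<Rightarrow> nat \<Rightarrow> nat) \<Rightarrow> (nat \<Rightarrow> nat \<Rightarrow> nat) \<Rightarrow> real" where
  "total_cost f0 f1 n T c0 c1 m0 m1 = (\<Sum>t\<in>{1..T}. period_cost f0 f1 n c0 c1 m0 m1 t)"

definition fdc_inv :: "(nat \<Rightarrow> nat) \<Rightarrow> (nat \<Rightarrow> nat \<Rightarrow> nat) \<Rightarrow> nat \<Rightarrow> nat \<Rightarrow> int" where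
  "fdc_inv I0 m1 t i = int (I0 i) - (\<Sum>\<tau>\<in>{1..t}. int (m1 \<tau> i))"

definition feasible ::
  "nat \<Rightarrow> nat \<Rightarrow> (nat \<Rightarrow> nat) \<Rightarrow> (nat \<Rightarrow> nat \<Rightarrow> nat)
   \<Rightarrow> (nat \<Rightarrow> nat \<Rightarrow> nat) \<Rightarrow> (nat \<Rightarrow> nat \<Rightarrow> nat) \<Rightarrow> bool" where
  "feasible n T I0 S m0 m1 \<longleftrightarrow>
     (\<forall>t\<in>{1..T}. \<forall>i<n. m0 t i + m1 t i = S t i \<and> int (m1 t i) \<le> fdc_inv I0 m1 (t - 1) i)"

definition OPT ::
  "real \<Rightarrow> real \<Rightarrow> nat \<Rightarrow> nat \<Rightarrow> (nat \<Rightarrow> nat) \<Rightarrow> (nat \<Rightarrow> nat \<Rightarrow> nat)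
   \<Rightarrow> (nat \<Rightarrow> nat \<Rightarrow> real) \<Rightarrow> (nat \<Rightarrow> nat \<Rightarrow> real) \<Rightarrow> real" where
  "OPT f0 f1 n T I0 S c0 c1 =
     Inf {total_cost f0 f1 n T c0 c1 m0 m1 | m0 m1. feasible n T I0 S m0 m1}"

text \<open>Cost-Comparison AdjV-Priority. Given the current FDC inventory vector I
  (= I_{1,t-1}), the tentative FDC amounts in period t.\<close>
definition hat_m1 ::
  "real \<Rightarrow> real \<Rightarrow> (nat \<Rightarrow> nat \<Rightarrow> nat) \<Rightarrow> (nat \<Rightarrow> nat \<Rightarrow> real) \<Rightarrow> (nat \<Rightarrow> nat \<Rightarrow> real)
   \<Rightarrow> (nat \<Rightarrow> nat) \<Rightarrow> nat \<Rightarrow> nat \<Rightarrow> nat" where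
  "hat_m1 a b S c0 c1 I t i =
     (if c1 t i < sqrt (a / b) * c0 t i then min (S t i) (I i) else 0)"

definition ccav_step ::
  "real \<Rightarrow> real \<Rightarrow> real \<Rightarrow> real \<Rightarrow> nat \<Rightarrow> (nat \<Rightarrow> nat \<Rightarrow> nat)
   \<Rightarrow> (nat \<Rightarrow> nat \<Rightarrow> real) \<Rightarrow> (nat \<Rightarrow> nat \<Rightarrow> real) \<Rightarrow> (nat \<Rightarrow> nat) \<Rightarrow> nat \<Rightarrow> nat \<Rightarrow> nat" where
  "ccav_step a b f0 f1 n S c0 c1 I t =
     (let h1 = hat_m1 a b S c0 c1 I t;
          h0 = (\<lambda>i. S t i - h1 i)
      in if period_cost f0 f1 n c0 c1 (\<lambda>_. h0) (\<lambda>_. h1) t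
              > f0 + (\<Sum>i<n. c0 t i * real (S t i))
         then (\<lambda>i. 0) else h1)"

primrec ccav_inv ::
  "real \<Rightarrow> real \<Rightarrow> real \<Rightarrow> real \<Rightarrow> nat \<Rightarrow> (nat \<Rightarrow> nat) \<Rightarrow> (nat \<Rightarrow> nat \<Rightarrow> nat)
   \<Rightarrow> (nat \<Rightarrow> nat \<Rightarrow> real) \<Rightarrow> (nat \<Rightarrow> nat \<Rightarrow> real) \<Rightarrow> nat \<Rightarrow> nat \<Rightarrow> nat" where
  "ccav_inv a b f0 f1 n I0 S c0 c1 0 = I0"
| "ccav_inv a b f0 f1 n I0 S c0 c1 (Suc t) =
     (\<lambda>i. ccav_inv a b f0 f1 n I0 S c0 c1 t i
          - ccav_step a b f0 f1 n S c0 c1 (ccav_inv a b f0 f1 n I0 S c0 c1 t) (Suc t) i)"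

definition ccav_m1 where
  "ccav_m1 a b f0 f1 n I0 S c0 c1 t i =
     ccav_step a b f0 f1 n S c0 c1 (ccav_inv a b f0 f1 n I0 S c0 c1 (t - 1)) t i"

definition ccav_m0 where
  "ccav_m0 a b f0 f1 n I0 S c0 c1 t i = S t i - ccav_m1 a b f0 f1 n I0 S c0 c1 t i"

definition ALG_ccav ::
  "real \<Rightarrow> real \<Rightarrow> real \<Rightarrow> real \<Rightarrow> nat \<Rightarrow> nat \<Rightarrow> (nat \<Rightarrow> nat) \<Rightarrow> (nat \<Rightarrow> nat \<Rightarrow> nat)
   \<Rightarrow> (nat \<Rightarrow> nat \<Rightarrow> real) \<Rightarrow> (nat \<Rightarrow> nat \<Rightarrow> real) \<Rightarrow> real" where
  "ALG_ccav a b f0 f1 n T I0 S c0 c1 =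
     total_cost f0 f1 n T c0 c1 (ccav_m0 a b f0 f1 n I0 S c0 c1) (ccav_m1 a b f0 f1 n I0 S c0 c1)"

end

theory Submission
  imports Defs
begin

lemma sfacts:
  fixes a b :: real
  assumes "0<a" "a<b"
  shows "sqrt (b/a) * sqrt (b/a) * a = b" "1 < sqrt (b/a)" "sqrt (a/b) = 1 / sqrt (b/a)"
proof -
  have "sqrt (b/a) * sqrt (b/a) = b/a" using assms by simp
  then show "sqrt (b/a) * sqrt (b/a) * a = b" using assms by simp
  show "1 < sqrt (b/a)" using assms by simp
  show "sqrt (a/b) = 1 / sqrt (b/a)" using assms by (simp add: real_sqrt_divide)
qed

lemma good_facts:
  fixes a b c0 c1 :: real
  assumes "0<a" "a<b" "a\<le>c1" "c1 < sqrt (a/b) * c0"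
  shows "sqrt (b/a) * c1 < c0" "b < sqrt (b/a) * c0" "c1 < c0"
proof -
  let ?s = "sqrt (b/a)"
  have s1: "1 < ?s" and ss: "?s * ?s * a = b" and th: "sqrt (a/b) = 1/ ?s" using sfacts[OF assms(1,2)] by auto
  have "c1 < c0 / ?s" using assms(4) th by simp
  then show g: "?s * c1 < c0" using s1 by (simp add: field_simps)
  have "?s * a \<le> ?s * c1" using assms(3) s1 by simp
  then have "?s * a < c0" using g by linarith
  then have "?s * (?s * a) < ?s * c0" using s1 by simp
  then show "b < ?s * c0" using ss by (metis mult.assoc)
  show "c1 < c0" using g s1 assms \<open>?s * a \<le> ?s * c1\<close> by (smt (verit) mult_le_cancel_right1)
qed

lemma bad_facts:
  fixes a b c0 c1 :: real
  assumes "0<a" "a<b" "\<not> c1 < sqrt (a/b) * c0"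
  shows "c0 \<le> sqrt (b/a) * c1"
proof -
  let ?s = "sqrt (b/a)"
  have s1: "1 < ?s" and th: "sqrt (a/b) = 1/ ?s" using sfacts[OF assms(1,2)] by auto
  have "c0 / ?s \<le> c1" using assms(3) th by simp
  then show ?thesis using s1 by (simp add: field_simps)
qed

lemma le_Rx: fixes R x :: real assumes "1 \<le> R" "0 \<le> x" shows "x \<le> R*x"
  using assms mult_right_mono[of 1 R x] by simp

lemma item_bound:
  fixes a b c0 c1 R S h p I J :: real
  assumes "0<a" "a<b" "a\<le>c0" "c0\<le>b" "a\<le>c1" "c1\<le>b" "1 + sqrt (b/a) \<le> R"
    "0 \<le> p" "p \<le> S" "0 \<le> h" "h \<le> S"
    "h = (if c1 < sqrt (a/b) * c0 then min S I else 0)" "p \<le> J"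
  shows "c0*(S-h) + c1*h + b*(max 0 (J - I - p + h) - max 0 (J - I)) \<le> R*(c0*(S-p) + c1*p)"
proof -
  let ?s = "sqrt (b/a)"
  have s1: "1 < ?s" using sfacts[OF assms(1,2)] by auto
  have R1: "1 \<le> R" using s1 assms(7) by linarith
  show ?thesis
  proof (cases "h < p")
    case True
    show ?thesis
    proof (cases "c1 < sqrt (a/b) * c0")
      case g: True
      then have "h = min S I" using assms(12) by simp
      then have hI: "h = I" using True assms(9) by linarith
      have "max 0 (J - I - p + h) - max 0 (J - I) = h - p" using hI assms(13) True by simp
      then have "c0*(S-h) + c1*h + b*(max 0 (J - I - p + h) - max 0 (J - I)) = c0*(S-h) + c1*h + b*(h-p)"
        by simp
      also have "\<dots> = c0*(S-p) + c1*h + (c0-b)*(p-h)"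
        by (simp add: algebra_simps)
      also have "\<dots> \<le> c0*(S-p) + c1*h" using assms(4) True by (simp add: mult_nonpos_nonneg)
      also have "\<dots> \<le> c0*(S-p) + c1*p" using True assms by (simp add: mult_left_mono)
      also have "\<dots> \<le> R*(c0*(S-p) + c1*p)" using R1 assms by (intro le_Rx) auto
      finally show ?thesis .
    next
      case bad: False
      then have h0: "h = 0" using assms(12) by simp
      have c0s: "c0 \<le> ?s * c1" using bad_facts[OF assms(1,2) bad] .
      have "max 0 (J - I - p + h) - max 0 (J - I) \<le> 0" using h0 assms(8) by simp
      then have "b*(max 0 (J - I - p + h) - max 0 (J - I)) \<le> 0" using assms by (simp add: mult_nonneg_nonpos)
      then have "c0*(S-h) + c1*h + b*(max 0 (J - I - p + h) - max 0 (J - I)) \<le> c0*(S-p) + c0*p"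
        using h0 by (simp add: algebra_simps)
      also have "\<dots> \<le> R*(c0*(S-p)) + R*(c1*p)"
      proof -
        have "c0*(S-p) \<le> R*(c0*(S-p))" using R1 assms by (intro le_Rx) auto
        moreover have "c0*p \<le> (?s*c1)*p" using c0s assms(8) by (simp add: mult_right_mono)
        moreover have "(?s*c1)*p \<le> R*(c1*p)" using assms s1 by (simp add: mult_right_mono)
        ultimately show ?thesis by linarith
      qed
      finally show ?thesis by (simp add: algebra_simps)
    qed
  next
    case False
    have "max 0 (J - I - p + h) - max 0 (J - I) \<le> h - p" using False by simp
    then have "c0*(S-h) + c1*h + b*(max 0 (J - I - p + h) - max 0 (J - I)) \<le> c0*(S-h) + c1*h + b*(h-p)"
      using assms by (simp add: mult_left_mono)
    also have "\<dots> \<le> R*(c0*(S-p) + c1*p)"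
    proof (cases "h = p")
      case True
      have "c0*(S-h) + c1*h + b*(h-p) = c0*(S-p) + c1*p" using True by simp
      also have "\<dots> \<le> R*(c0*(S-p) + c1*p)" using R1 assms by (intro le_Rx) auto
      finally show ?thesis .
    next
      case hp: False
      then have "0 < h" using False assms by linarith
      then have g: "c1 < sqrt (a/b) * c0" using assms(12) by (auto split: if_splits)
      from good_facts[OF assms(1,2,5) g] have "b < ?s * c0" "c1 < c0" by auto
      moreover have "(1 + ?s) * c0 \<le> R * c0" using assms(7) assms(3,1) by (intro mult_right_mono) auto
      ultimately have cb: "c1 + b \<le> R * c0" by (simp add: algebra_simps)
      have "c0*(S-h) + c1*h + b*(h-p) = c0*(S-h) + c1*p + (c1+b)*(h-p)" by (simp add: algebra_simps)
      also have "\<dots> \<le> R*(c0*(S-h)) + R*(c1*p) + (R*c0)*(h-p)"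
      proof -
        have "c0*(S-h) \<le> R*(c0*(S-h))" using R1 assms by (intro le_Rx) auto
        moreover have "c1*p \<le> R*(c1*p)" using R1 assms by (intro le_Rx) auto
        moreover have "(c1+b)*(h-p) \<le> (R*c0)*(h-p)" using cb False by (simp add: mult_right_mono)
        ultimately show ?thesis by linarith
      qed
      also have "\<dots> = R*(c0*(S-p) + c1*p)" by (simp add: algebra_simps)
      finally show ?thesis .
    qed
    finally show ?thesis .
  qed
qed

lemma item_bound0:
  fixes a b c0 c1 R S h I J :: real
  assumes "0<a" "a<b" "a\<le>c0" "c0\<le>b" "a\<le>c1" "c1\<le>b" "1 + sqrt (b/a) \<le> R"
    "0 \<le> h" "h \<le> S"
    "h = (if c1 < sqrt (a/b) * c0 then min S I else 0)"
  shows "b*(max 0 (J - I + h) - max 0 (J - I)) \<le> (R - 1)*(c0*S)"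
proof -
  let ?s = "sqrt (b/a)"
  have s1: "1 < ?s" using sfacts[OF assms(1,2)] by auto
  have "max 0 (J - I + h) - max 0 (J - I) \<le> h" using assms by simp
  then have "b*(max 0 (J - I + h) - max 0 (J - I)) \<le> b*h" using assms by (simp add: mult_left_mono)
  also have "\<dots> \<le> (R - 1)*(c0*S)"
  proof (cases "h = 0")
    case True
    have "0 \<le> R - 1" using assms s1 by linarith
    moreover have "0 \<le> c0*S" using assms by simp
    ultimately show ?thesis using True by simp
  next
    case False
    then have g: "c1 < sqrt (a/b) * c0" using assms(10) by (auto split: if_splits)
    from good_facts[OF assms(1,2,5) g] have "b < ?s * c0" by auto
    then have "b*h \<le> (?s*c0)*h" using assms by (simp add: mult_right_mono)
    also have "\<dots> \<le> (?s*c0)*S" using assms s1 by (simp add: mult_left_mono)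
    also have "\<dots> \<le> ((R-1)*c0)*S" using assms s1 by (simp add: mult_right_mono)
    finally show ?thesis by (simp add: mult.assoc)
  qed
  finally show ?thesis .
qed


lemma ind_le1: "ind P \<le> 1" and ind_ge0: "0 \<le> ind P" by (auto simp: ind_def)

lemma period_bound:
  fixes a b f0 f1 R A :: real and n :: nat and S h p I :: "nat \<Rightarrow> nat"
    and J :: "nat \<Rightarrow> int" and c0 c1 :: "nat \<Rightarrow> real"
  assumes "0<a" "a<b" "0 \<le> f0" "0 < f1" "R = 1 + max (f0/f1) (sqrt (b/a))"
    and c0b: "\<And>i. i<n \<Longrightarrow> a \<le> c0 i \<and> c0 i \<le> b"
    and c1b: "\<And>i. i<n \<Longrightarrow> a \<le> c1 i \<and> c1 i \<le> b"
    and hdef: "\<And>i. i<n \<Longrightarrow> h i = (if c1 i < sqrt (a/b) * c0 i then min (S i) (I i) else 0)"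
    and pS: "\<And>i. i<n \<Longrightarrow> p i \<le> S i"
    and pJ: "\<And>i. i<n \<Longrightarrow> int (p i) \<le> J i"
    and hat: "A \<le> (f0 * ind ((\<Sum>i<n. S i - h i) > 0) + (\<Sum>i<n. c0 i * real (S i - h i)))
                 + (f1 * ind ((\<Sum>i<n. h i) > 0) + (\<Sum>i<n. c1 i * real (h i)))"
    and full: "A \<le> f0 * ind ((\<Sum>i<n. S i) > 0) + (\<Sum>i<n. c0 i * real (S i))"
  shows "A + b * (\<Sum>i<n. max 0 (real_of_int (J i) - real (I i) - real (p i) + real (h i))
                       - max 0 (real_of_int (J i) - real (I i)))
         \<le> R * ((f0 * ind ((\<Sum>i<n. S i - p i) > 0) + (\<Sum>i<n. c0 i * real (S i - p i)))
                 + (f1 * ind ((\<Sum>i<n. p i) > 0) + (\<Sum>i<n. c1 i * real (p i))))"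
proof -
  have Rs: "1 + sqrt (b/a) \<le> R" and Rf: "1 + f0/f1 \<le> R" using assms(5) by auto
  have R1: "1 \<le> R" using Rf assms(3,4) by (smt (verit) divide_nonneg_pos)
  have hS: "h i \<le> S i" if "i<n" for i using hdef[OF that] by auto
  let ?D = "\<lambda>i. max 0 (real_of_int (J i) - real (I i) - real (p i) + real (h i))
                       - max 0 (real_of_int (J i) - real (I i))"
  show ?thesis
  proof (cases "(\<Sum>i<n. p i) > 0")
    case True
    have fx: "f0 * ind ((\<Sum>i<n. S i - h i) > 0) + f1 * ind ((\<Sum>i<n. h i) > 0) \<le> R * f1"
    proof -
      have "f0 * ind ((\<Sum>i<n. S i - h i) > 0) \<le> f0" using ind_le1 assms(3) by (simp add: mult_left_le)
      moreover have "f1 * ind ((\<Sum>i<n. h i) > 0) \<le> f1" using ind_le1 assms(4) by (simp add: mult_left_le)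
      moreover have "f0 + f1 \<le> R * f1"
      proof -
        have "f0 + f1 = (1 + f0/f1) * f1" using assms(4) by (simp add: field_simps)
        also have "\<dots> \<le> R * f1" using Rf assms(4) by (intro mult_right_mono) auto
        finally show ?thesis .
      qed
      ultimately show ?thesis by linarith
    qed
    have it: "c0 i * real (S i - h i) + c1 i * real (h i) + b * ?D i
        \<le> R * (c0 i * real (S i - p i) + c1 i * real (p i))" if "i<n" for i
    proof -
      have e1: "real (S i - h i) = real (S i) - real (h i)" using hS[OF that] by simp
      have e2: "real (S i - p i) = real (S i) - real (p i)" using pS[OF that] by simp
      have hh: "real (h i) = (if c1 i < sqrt (a/b) * c0 i then min (real (S i)) (real (I i)) else 0)"
        using hdef[OF that] by (simp add: of_nat_min)
      show ?thesis unfolding e1 e2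
        using item_bound[OF assms(1,2), of "c0 i" "c1 i" R "real (p i)" "real (S i)" "real (h i)" "real (I i)" "real_of_int (J i)"]
          c0b[OF that] c1b[OF that] Rs pS[OF that] hS[OF that] hh pJ[OF that] by simp
    qed
    have "A + b * (\<Sum>i<n. ?D i) \<le> (f0 * ind ((\<Sum>i<n. S i - h i) > 0) + f1 * ind ((\<Sum>i<n. h i) > 0))
        + (\<Sum>i<n. c0 i * real (S i - h i) + c1 i * real (h i) + b * ?D i)"
      using hat by (simp add: sum.distrib sum_distrib_left)
    also have "\<dots> \<le> R * f1 + (\<Sum>i<n. R * (c0 i * real (S i - p i) + c1 i * real (p i)))"
      using fx it by (intro add_mono sum_mono) auto
    also have "\<dots> \<le> R * ((f0 * ind ((\<Sum>i<n. S i - p i) > 0) + (\<Sum>i<n. c0 i * real (S i - p i)))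
                 + (f1 * ind ((\<Sum>i<n. p i) > 0) + (\<Sum>i<n. c1 i * real (p i))))"
    proof -
      have "0 \<le> R * (f0 * ind ((\<Sum>i<n. S i - p i) > 0))" using R1 assms(3) ind_ge0 by simp
      then show ?thesis using True by (simp add: ind_def sum_distrib_left sum.distrib algebra_simps)
    qed
    finally show ?thesis .
  next
    case False
    then have p0: "p i = 0" if "i<n" for i using that by simp
    have it: "b * ?D i \<le> (R - 1) * (c0 i * real (S i))" if "i<n" for i
    proof -
      have hh: "real (h i) = (if c1 i < sqrt (a/b) * c0 i then min (real (S i)) (real (I i)) else 0)"
        using hdef[OF that] by (simp add: of_nat_min)
      show ?thesis using p0[OF that]
        item_bound0[OF assms(1,2), of "c0 i" "c1 i" R "real (h i)" "real (S i)" "real (I i)" "real_of_int (J i)"]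
          c0b[OF that] c1b[OF that] Rs hS[OF that] hh by simp
    qed
    let ?F = "f0 * ind ((\<Sum>i<n. S i) > 0) + (\<Sum>i<n. c0 i * real (S i))"
    have "b * (\<Sum>i<n. ?D i) \<le> (\<Sum>i<n. (R - 1) * (c0 i * real (S i)))"
      unfolding sum_distrib_left using it by (intro sum_mono) auto
    also have "\<dots> = (R - 1) * (\<Sum>i<n. c0 i * real (S i))" by (simp add: sum_distrib_left)
    also have "\<dots> \<le> (R - 1) * ?F"
      using R1 assms(3) ind_ge0 by (intro mult_left_mono) auto
    finally have "A + b * (\<Sum>i<n. ?D i) \<le> ?F + (R - 1) * ?F" using full by linarith
    also have "\<dots> = R * ?F" by (simp add: algebra_simps)
    also have "?F = ((f0 * ind ((\<Sum>i<n. S i - p i) > 0) + (\<Sum>i<n. c0 i * real (S i - p i)))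
                 + (f1 * ind ((\<Sum>i<n. p i) > 0) + (\<Sum>i<n. c1 i * real (p i))))"
      using p0 by (simp add: ind_def)
    finally show ?thesis .
  qed
qed


lemma step_cost:
  fixes a b f0 f1 :: real and S :: "nat \<Rightarrow> nat \<Rightarrow> nat" and c0 c1 :: "nat \<Rightarrow> nat \<Rightarrow> real"
    and n t :: nat and I :: "nat \<Rightarrow> nat"
  assumes "0 \<le> f0"
  defines "u \<equiv> ccav_step a b f0 f1 n S c0 c1 I t"
    and "h \<equiv> hat_m1 a b S c0 c1 I t"
  shows "period_cost f0 f1 n c0 c1 (\<lambda>_ i. S t i - u i) (\<lambda>_. u) t
           \<le> period_cost f0 f1 n c0 c1 (\<lambda>_ i. S t i - h i) (\<lambda>_. h) t"
    and "period_cost f0 f1 n c0 c1 (\<lambda>_ i. S t i - u i) (\<lambda>_. u) t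
           \<le> f0 * ind ((\<Sum>i<n. S t i) > 0) + (\<Sum>i<n. c0 t i * real (S t i))"
proof -
  let ?hc = "period_cost f0 f1 n c0 c1 (\<lambda>_ i. S t i - h i) (\<lambda>_. h) t"
  let ?full = "f0 * ind ((\<Sum>i<n. S t i) > 0) + (\<Sum>i<n. c0 t i * real (S t i))"
  have ud: "u = (if ?hc > f0 + (\<Sum>i<n. c0 t i * real (S t i)) then (\<lambda>i. 0) else h)"
    unfolding u_def h_def ccav_step_def Let_def by simp
  have fullle: "?full \<le> f0 + (\<Sum>i<n. c0 t i * real (S t i))"
    using assms(1) ind_le1 by (simp add: mult_left_le)
  have "period_cost f0 f1 n c0 c1 (\<lambda>_ i. S t i - u i) (\<lambda>_. u) t \<le> ?hc
      \<and> period_cost f0 f1 n c0 c1 (\<lambda>_ i. S t i - u i) (\<lambda>_. u) t \<le> ?full"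
  proof (cases "?hc > f0 + (\<Sum>i<n. c0 t i * real (S t i))")
    case True
    then have u0: "u = (\<lambda>i. 0)" using ud by simp
    have "period_cost f0 f1 n c0 c1 (\<lambda>_ i. S t i - u i) (\<lambda>_. u) t = ?full"
      unfolding u0 period_cost_def by (simp add: ind_def)
    then show ?thesis using True fullle by linarith
  next
    case False
    then have uh: "u = h" using ud by simp
    have "?hc \<le> ?full"
    proof (cases "(\<Sum>i<n. S t i) > 0")
      case True then show ?thesis using False by (simp add: ind_def)
    next
      case F2: False
      then have "S t i = 0" if "i<n" for i using that by simp
      moreover have "h i = 0" if "i<n" for i using calculation[OF that] unfolding h_def hat_m1_def by simp
      ultimately show ?thesis unfolding period_cost_def by (simp add: ind_def)
    qed
    then show ?thesis using uh by simp
  qed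
  then show "period_cost f0 f1 n c0 c1 (\<lambda>_ i. S t i - u i) (\<lambda>_. u) t \<le> ?hc"
    "period_cost f0 f1 n c0 c1 (\<lambda>_ i. S t i - u i) (\<lambda>_. u) t \<le> ?full" by auto
qed

lemma step_le_hat: "ccav_step a b f0 f1 n S c0 c1 I t i \<le> hat_m1 a b S c0 c1 I t i"
  unfolding ccav_step_def Let_def by auto

lemma hat_le_I: "hat_m1 a b S c0 c1 I t i \<le> I i" and hat_le_S: "hat_m1 a b S c0 c1 I t i \<le> S t i"
  unfolding hat_m1_def by auto

lemma fdc_inv_0: "fdc_inv I0 m1 0 i = int (I0 i)" unfolding fdc_inv_def by simp

lemma fdc_inv_Suc: "fdc_inv I0 m1 (Suc k) i = fdc_inv I0 m1 k i - int (m1 (Suc k) i)"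
  unfolding fdc_inv_def by (simp add: sum.cl_ivl_Suc)

lemma telescope: fixes F :: "nat \<Rightarrow> real" and T :: nat
  shows "(\<Sum>t\<in>{1..T}. F t - F (t - 1)) = F T - F 0"
  by (induction T) (auto simp: sum.cl_ivl_Suc)


lemma alg_le_plan:
  fixes a b f0 f1 :: real
    and n T :: nat
    and I0 :: "nat \<Rightarrow> nat"
    and S :: "nat \<Rightarrow> nat \<Rightarrow> nat"
    and c0 c1 :: "nat \<Rightarrow> nat \<Rightarrow> real"
  assumes "0 < a" and "a < b" and "0 \<le> f0" and "0 < f1"
    and c0b: "\<And>t i. t \<in> {1..T} \<Longrightarrow> i < n \<Longrightarrow> a \<le> c0 t i \<and> c0 t i \<le> b"
    and c1b: "\<And>t i. t \<in> {1..T} \<Longrightarrow> i < n \<Longrightarrow> a \<le> c1 t i \<and> c1 t i \<le> b"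
    and feas: "feasible n T I0 S m0 m1"
  shows "ALG_ccav a b f0 f1 n T I0 S c0 c1
           \<le> (1 + max (f0 / f1) (sqrt (b / a))) * total_cost f0 f1 n T c0 c1 m0 m1"
proof -
  define R where "R = 1 + max (f0 / f1) (sqrt (b / a))"
  define AI where "AI = ccav_inv a b f0 f1 n I0 S c0 c1"
  define \<Phi> where "\<Phi> t = b * (\<Sum>i<n. max 0 (real_of_int (fdc_inv I0 m1 t i) - real (AI t i)))" for t
  define PA where "PA t = period_cost f0 f1 n c0 c1 (ccav_m0 a b f0 f1 n I0 S c0 c1) (ccav_m1 a b f0 f1 n I0 S c0 c1) t" for t
  define PO where "PO t = period_cost f0 f1 n c0 c1 m0 m1 t" for t
  have step: "PA t + (\<Phi> t - \<Phi> (t - 1)) \<le> R * PO t" if t: "t \<in> {1..T}" for t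
  proof -
    obtain k where tk: "t = Suc k" using t by (cases t) auto
    define I where "I = AI k"
    define J where "J i = fdc_inv I0 m1 k i" for i
    define h where "h = hat_m1 a b S c0 c1 I t"
    define u where "u = ccav_step a b f0 f1 n S c0 c1 I t"
    have m1u: "ccav_m1 a b f0 f1 n I0 S c0 c1 t = u"
      unfolding ccav_m1_def u_def I_def AI_def tk by (rule ext) simp
    have alg_eq: "PA t = period_cost f0 f1 n c0 c1 (\<lambda>_ i. S t i - u i) (\<lambda>_. u) t"
      unfolding PA_def period_cost_def ccav_m0_def m1u by simp
    have fe: "m0 t i + m1 t i = S t i" "int (m1 t i) \<le> J i" if "i<n" for i
    proof -
      have "\<forall>i<n. m0 t i + m1 t i = S t i \<and> int (m1 t i) \<le> fdc_inv I0 m1 (t - 1) i"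
        using feas t unfolding feasible_def by blast
      then show "m0 t i + m1 t i = S t i" "int (m1 t i) \<le> J i" using that unfolding J_def tk by auto
    qed
    have pS: "m1 t i \<le> S t i" if "i<n" for i using fe(1)[OF that] by linarith
    have opt_eq: "PO t = (f0 * ind ((\<Sum>i<n. S t i - m1 t i) > 0) + (\<Sum>i<n. c0 t i * real (S t i - m1 t i)))
                 + (f1 * ind ((\<Sum>i<n. m1 t i) > 0) + (\<Sum>i<n. c1 t i * real (m1 t i)))"
    proof -
      have e: "m0 t i = S t i - m1 t i" if "i<n" for i using fe(1)[OF that] by linarith
      have "(\<Sum>i<n. m0 t i) = (\<Sum>i<n. S t i - m1 t i)" using e by (intro sum.cong) auto
      moreover have "(\<Sum>i<n. c0 t i * real (m0 t i)) = (\<Sum>i<n. c0 t i * real (S t i - m1 t i))"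
        using e by (intro sum.cong) auto
      ultimately show ?thesis unfolding PO_def period_cost_def by simp
    qed
    have hat_eq: "period_cost f0 f1 n c0 c1 (\<lambda>_ i. S t i - h i) (\<lambda>_. h) t =
         (f0 * ind ((\<Sum>i<n. S t i - h i) > 0) + (\<Sum>i<n. c0 t i * real (S t i - h i)))
                 + (f1 * ind ((\<Sum>i<n. h i) > 0) + (\<Sum>i<n. c1 t i * real (h i)))"
      unfolding period_cost_def by simp
    have "PA t \<le> period_cost f0 f1 n c0 c1 (\<lambda>_ i. S t i - h i) (\<lambda>_. h) t"
      unfolding alg_eq u_def h_def by (rule step_cost(1)[OF assms(3)])
    then have sc1: "PA t \<le> (f0 * ind ((\<Sum>i<n. S t i - h i) > 0) + (\<Sum>i<n. c0 t i * real (S t i - h i)))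
                 + (f1 * ind ((\<Sum>i<n. h i) > 0) + (\<Sum>i<n. c1 t i * real (h i)))"
      unfolding hat_eq .
    have sc2: "PA t \<le> f0 * ind ((\<Sum>i<n. S t i) > 0) + (\<Sum>i<n. c0 t i * real (S t i))"
      unfolding alg_eq u_def by (rule step_cost(2)[OF assms(3)])
    have PB: "PA t + b * (\<Sum>i<n. max 0 (real_of_int (J i) - real (I i) - real (m1 t i) + real (h i))
                       - max 0 (real_of_int (J i) - real (I i))) \<le> R * PO t"
      unfolding opt_eq
      apply (rule period_bound[OF assms(1-4) R_def, where S="S t" and h=h and p="m1 t" and I=I and J=J
            and ?c0.0="c0 t" and ?c1.0="c1 t"])
      using c0b[OF t] c1b[OF t] fe pS sc1 sc2 by (auto simp: h_def hat_m1_def)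
    have dphi: "\<Phi> t - \<Phi> (t - 1) \<le> b * (\<Sum>i<n. max 0 (real_of_int (J i) - real (I i) - real (m1 t i) + real (h i))
                       - max 0 (real_of_int (J i) - real (I i)))"
    proof -
      have "max 0 (real_of_int (fdc_inv I0 m1 t i) - real (AI t i))
            \<le> max 0 (real_of_int (J i) - real (I i) - real (m1 t i) + real (h i))" for i
      proof -
        have uh: "u i \<le> h i" unfolding u_def h_def by (rule step_le_hat)
        have hI: "h i \<le> I i" unfolding h_def by (rule hat_le_I)
        have "AI t i = I i - u i" unfolding AI_def I_def tk u_def by simp
        then have "real (AI t i) = real (I i) - real (u i)" using uh hI by simp
        moreover have "fdc_inv I0 m1 t i = J i - int (m1 t i)" unfolding J_def tk by (rule fdc_inv_Suc)
        ultimately show ?thesis using uh by simp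
      qed
      then have "(\<Sum>i<n. max 0 (real_of_int (fdc_inv I0 m1 t i) - real (AI t i)))
          \<le> (\<Sum>i<n. max 0 (real_of_int (J i) - real (I i) - real (m1 t i) + real (h i)))"
        by (intro sum_mono) auto
      moreover have "\<Phi> (t - 1) = b * (\<Sum>i<n. max 0 (real_of_int (J i) - real (I i)))"
        unfolding \<Phi>_def J_def I_def tk by simp
      ultimately show ?thesis unfolding \<Phi>_def using assms(1,2)
        by (simp add: sum_subtractf right_diff_distrib[symmetric] mult_left_mono)
    qed
    show ?thesis using PB dphi by linarith
  qed
  have "(\<Sum>t\<in>{1..T}. PA t + (\<Phi> t - \<Phi> (t - 1))) \<le> (\<Sum>t\<in>{1..T}. R * PO t)"
    using step by (intro sum_mono) auto
  moreover have "(\<Sum>t\<in>{1..T}. PA t + (\<Phi> t - \<Phi> (t - 1))) = (\<Sum>t\<in>{1..T}. PA t) + (\<Phi> T - \<Phi> 0)"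
    using telescope[of \<Phi> T] by (simp add: sum.distrib)
  moreover have "\<Phi> 0 = 0" unfolding \<Phi>_def AI_def by (simp add: fdc_inv_0)
  moreover have "0 \<le> \<Phi> T" unfolding \<Phi>_def using assms(1,2) by (intro mult_nonneg_nonneg sum_nonneg) auto
  ultimately have "(\<Sum>t\<in>{1..T}. PA t) \<le> R * (\<Sum>t\<in>{1..T}. PO t)"
    by (simp add: sum_distrib_left)
  then show ?thesis unfolding ALG_ccav_def total_cost_def PA_def PO_def R_def .
qed


theorem theorem5:
  fixes a b f0 f1 :: real
    and n T :: nat
    and I0 :: "nat \<Rightarrow> nat"
    and S :: "nat \<Rightarrow> nat \<Rightarrow> nat"
    and c0 c1 :: "nat \<Rightarrow> nat \<Rightarrow> real"
  assumes "0 < a" and "a < b" and "0 \<le> f0" and "0 < f1"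
    and "\<And>t i. t \<in> {1..T} \<Longrightarrow> i < n \<Longrightarrow> a \<le> c0 t i \<and> c0 t i \<le> b"
    and "\<And>t i. t \<in> {1..T} \<Longrightarrow> i < n \<Longrightarrow> a \<le> c1 t i \<and> c1 t i \<le> b"
  shows "ALG_ccav a b f0 f1 n T I0 S c0 c1
           \<le> (1 + max (f0 / f1) (sqrt (b / a))) * OPT f0 f1 n T I0 S c0 c1"
proof -
  define R where "R = 1 + max (f0 / f1) (sqrt (b / a))"
  define X where "X = {total_cost f0 f1 n T c0 c1 m0 m1 | m0 m1. feasible n T I0 S m0 m1}"
  have Rpos: "0 < R" unfolding R_def using assms(3,4) by (smt (verit) max.cobounded1 divide_nonneg_pos)
  have "feasible n T I0 S S (\<lambda>_ _. 0)" unfolding feasible_def fdc_inv_def by auto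
  then have ne: "X \<noteq> {}" unfolding X_def by blast
  have lb: "ALG_ccav a b f0 f1 n T I0 S c0 c1 / R \<le> x" if xX: "x \<in> X" for x
  proof -
    obtain m0 m1 where x: "x = total_cost f0 f1 n T c0 c1 m0 m1" and f: "feasible n T I0 S m0 m1"
      using xX unfolding X_def by blast
    have "ALG_ccav a b f0 f1 n T I0 S c0 c1 \<le> R * x"
      unfolding x R_def by (rule alg_le_plan[OF assms f])
    then show ?thesis using Rpos by (simp add: divide_le_eq mult.commute)
  qed
  have "ALG_ccav a b f0 f1 n T I0 S c0 c1 / R \<le> Inf X" by (rule cInf_greatest[OF ne lb])
  then have "ALG_ccav a b f0 f1 n T I0 S c0 c1 \<le> R * Inf X" using Rpos by (simp add: divide_le_eq mult.commute)
  then show ?thesis unfolding R_def X_def OPT_def .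
qed

end
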